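(* Let $F=F(N,\mathcal D)$ be a non-fragile connected GSC having at least one cut point. Then $F$ has a cut point with a unique representation, i.e. a cut point $x$ such that there is exactly one $\mathbf i\in\mathcal D^\infty$ with $\pi(\mathbf i)=x$.
   Context: GSC: $N\ge2$, $\mathcal D\subset\{0,\dots,N-1\}^2$ with $1<|\mathcal D|<N^2$, $\varphi_i(x)=\frac1N(x+i)$, $F$ the attractor $F=\bigcup_{i\in\mathcal D}\varphi_i(F)$. $\mathcal D^\infty$ is the set of infinite sequences $i_1i_2\cdots$ over $\mathcal D$; the coding map $\pi:\mathcal D^\infty\to F$ sends $\mathbf i$ to the unique point of $\bigcap_{k\ge1}\varphi_{i_1}\circ\cdots\circ\varphi_{i_k}(F)$; $\mathbf i$ is called a representation of $\pi(\mathbf i)$. $F$ is fragile if there is a partition $\mathcal D=\mathcal D_1\cup\mathcal D_2$ into disjoint nonempty sets with $\big(\bigcup_{i\in\mathcal D_1}\varphi_i(F)\big)\cap\big(\bigcup_{i\in\mathcal D_2}\varphi_i(F)\big)$ a singleton; non-fragile otherwise. *)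

theory Defs
  imports "HOL-Analysis.Analysis"
begin

type_synonym pt = "real \<times> real"
type_synonym digit = "nat \<times> nat"

definition phi :: "nat \<Rightarrow> digit \<Rightarrow> pt \<Rightarrow> pt" where
  "phi N i x = ((fst x + real (fst i)) / real N, (snd x + real (snd i)) / real N)"

definition GSC_data :: "nat \<Rightarrow> digit set \<Rightarrow> bool" where
  "GSC_data N D \<longleftrightarrow> N \<ge> 2 \<and> D \<subseteq> {0..<N} \<times> {0..<N} \<and> 1 < card D \<and> card D < N^2"

definition is_attractor :: "nat \<Rightarrow> digit set \<Rightarrow> pt set \<Rightarrow> bool" where
  "is_attractor N D F \<longleftrightarrow> compact F \<and> F \<noteq> {} \<and> F = (\<Union>i\<in>D. phi N i ` F)"

definition Dinf :: "digit set \<Rightarrow> (nat \<Rightarrow> digit) set" where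
  "Dinf D = {s. \<forall>k. s k \<in> D}"

text \<open>comp N s k = phi_{s 0} o ... o phi_{s (k-1)}\<close>
fun comp :: "nat \<Rightarrow> (nat \<Rightarrow> digit) \<Rightarrow> nat \<Rightarrow> pt \<Rightarrow> pt" where
  "comp N s 0 = id"
| "comp N s (Suc k) = comp N s k \<circ> phi N (s k)"

definition coding :: "nat \<Rightarrow> pt set \<Rightarrow> (nat \<Rightarrow> digit) \<Rightarrow> pt" where
  "coding N F s = (THE x. x \<in> (\<Inter>k\<in>{1..}. comp N s k ` F))"

definition fragile :: "nat \<Rightarrow> digit set \<Rightarrow> pt set \<Rightarrow> bool" where
  "fragile N D F \<longleftrightarrow> (\<exists>D1 D2. D1 \<union> D2 = D \<and> D1 \<inter> D2 = {} \<and> D1 \<noteq> {} \<and> D2 \<noteq> {} \<and>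
     (\<exists>x. (\<Union>i\<in>D1. phi N i ` F) \<inter> (\<Union>i\<in>D2. phi N i ` F) = {x}))"

definition cut_point :: "pt set \<Rightarrow> pt \<Rightarrow> bool" where
  "cut_point F x \<longleftrightarrow> x \<in> F \<and> \<not> connected (F - {x})"

end

theory Submission imports Defs begin

definition pre :: "nat \<Rightarrow> digit \<Rightarrow> pt \<Rightarrow> pt" where
  "pre N i c = (real N * fst c - real (fst i), real N * snd c - real (snd i))"

lemma phi_simps: "fst (phi N i x) = (fst x + real (fst i)) / real N"
  "snd (phi N i x) = (snd x + real (snd i)) / real N"
  by (simp_all add: phi_def)

lemma pre_phi: "N > 0 \<Longrightarrow> pre N i (phi N i x) = x"
  by (simp add: pre_def phi_def prod_eq_iff)

lemma phi_pre: "N > 0 \<Longrightarrow> phi N i (pre N i x) = x"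
  by (simp add: pre_def phi_def prod_eq_iff)

lemma inj_phi: "N > 0 \<Longrightarrow> inj (phi N i)"
  by (metis inj_on_inverseI pre_phi)

lemma cont_phi: "N > 0 \<Longrightarrow> continuous_on S (phi N i)"
  unfolding phi_def by (intro continuous_intros) auto

lemma comp_Suc': "comp N s (Suc k) = phi N (s 0) \<circ> comp N (\<lambda>n. s (Suc n)) k"
proof (induction k)
  case (Suc k)
  have "comp N s (Suc (Suc k)) = comp N s (Suc k) \<circ> phi N (s (Suc k))" by (simp only: comp.simps)
  also have "\<dots> = phi N (s 0) \<circ> comp N (\<lambda>n. s (Suc n)) k \<circ> phi N (s (Suc k))" by (simp only: Suc.IH)
  also have "\<dots> = phi N (s 0) \<circ> comp N (\<lambda>n. s(Suc n)) (Suc k)" by (simp only: comp.simps o_assoc)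
  finally show ?case .
qed simp

lemma comp_fst: "N > 0 \<Longrightarrow> fst (comp N s k p) - fst (comp N s k q) = (fst p - fst q) / real N ^ k"
proof (induction k arbitrary: p q)
  case (Suc k)
  have "fst (comp N s (Suc k) p) - fst (comp N s (Suc k) q) = fst (comp N s k (phi N (s k) p)) - fst (comp N s k (phi N (s k) q))" by simp
  also have "\<dots> = (fst (phi N (s k) p) - fst (phi N (s k) q)) / real N ^ k" by (rule Suc.IH[OF Suc.prems])
  also have "\<dots> = (fst p - fst q) / real N ^ Suc k" using Suc.prems by (simp add: phi_simps field_simps)
  finally show ?case .
qed simp

lemma comp_snd: "N > 0 \<Longrightarrow> snd (comp N s k p) - snd (comp N s k q) = (snd p - snd q) / real N ^ k"
proof (induction k arbitrary: p q)
  case (Suc k)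
  have "snd (comp N s (Suc k) p) - snd (comp N s (Suc k) q) = snd (comp N s k (phi N (s k) p)) - snd (comp N s k (phi N (s k) q))" by simp
  also have "\<dots> = (snd (phi N (s k) p) - snd (phi N (s k) q)) / real N ^ k" by (rule Suc.IH[OF Suc.prems])
  also have "\<dots> = (snd p - snd q) / real N ^ Suc k" using Suc.prems by (simp add: phi_simps field_simps)
  finally show ?case .
qed simp

locale gsc =
  fixes N :: nat and D :: "digit set" and F :: "pt set"
  assumes gd: "GSC_data N D" and att: "is_attractor N D F"
begin

lemma N2: "N \<ge> 2" and Npos: "N > 0" using gd by (auto simp: GSC_data_def)

lemma finD: "finite D"
  using gd unfolding GSC_data_def by (meson finite_SigmaI finite_atLeastLessThan finite_subset)

lemma digit_lt: "i \<in> D \<Longrightarrow> fst i < N \<and> snd i < N"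
  using gd unfolding GSC_data_def by auto

lemma F_eq: "F = (\<Union>i\<in>D. phi N i ` F)" and cF: "compact F" and neF: "F \<noteq> {}"
  using att by (auto simp: is_attractor_def)

lemma memF: assumes "p \<in> F" shows "\<exists>i\<in>D. p \<in> phi N i ` F"
proof -
  have "p \<in> (\<Union>i\<in>D. phi N i ` F)" using assms F_eq by simp
  then show ?thesis by blast
qed

lemma K_sub: "i \<in> D \<Longrightarrow> phi N i ` F \<subseteq> F"
  using F_eq by blast

lemma cK: "compact (phi N i ` F)"
  by (rule compact_continuous_image[OF cont_phi[OF Npos] cF])

lemma bound_gen:
  assumes g: "\<And>i x. g (phi N i x) = (g x + real (h i)) / real N"
    and h: "\<And>i. i \<in> D \<Longrightarrow> h i < N"
    and cg: "continuous_on UNIV g"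
    and p: "p \<in> F"
  shows "0 \<le> g p \<and> g p \<le> 1"
proof -
  have cgF: "compact (g ` F)"
    by (rule compact_continuous_image[OF continuous_on_subset[OF cg] cF]) auto
  obtain M where M: "M \<in> g ` F" "\<And>t. t \<in> g ` F \<Longrightarrow> t \<le> M"
    using compact_attains_sup[OF cgF] neF by blast
  obtain m where m: "m \<in> g ` F" "\<And>t. t \<in> g ` F \<Longrightarrow> m \<le> t"
    using compact_attains_inf[OF cgF] neF by blast
  have N1: "real N > 1" using N2 by simp
  have "M \<le> 1"
  proof -
    obtain p where p: "p \<in> F" "M = g p" using M by blast
    then obtain i q where iq: "i \<in> D" "q \<in> F" "p = phi N i q" using F_eq by blast
    have gq: "g q \<le> M" using M iq by blast
    have hb: "real (h i) \<le> real N - 1" using h[OF iq(1)] by linarith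
    have e: "M * real N = g q + real (h i)" using p iq g[of i q] Npos by (simp add: field_simps)
    have "M * real N \<le> M + (real N - 1)" using gq hb e by linarith
    then have "(M - 1) * (real N - 1) \<le> 0" by (simp add: algebra_simps)
    then show ?thesis using N1 by (simp add: mult_le_0_iff)
  qed
  moreover have "m \<ge> 0"
  proof -
    obtain p where p: "p \<in> F" "m = g p" using m by blast
    then obtain i q where iq: "i \<in> D" "q \<in> F" "p = phi N i q" using F_eq by blast
    have gq: "g q \<ge> m" using m iq by blast
    have e: "m * real N = g q + real (h i)" using p iq g[of i q] Npos by (simp add: field_simps)
    have "m * real N \<ge> m" using gq e by simp
    then have "m * (real N - 1) \<ge> 0" by (simp add: algebra_simps)
    then show ?thesis using N1 by (simp add: zero_le_mult_iff)
  qed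
  ultimately show ?thesis using M m p by force
qed

lemma unit: assumes "p \<in> F" shows "0 \<le> fst p" "fst p \<le> 1" "0 \<le> snd p" "snd p \<le> 1"
  using bound_gen[of fst fst, OF _ _ _ assms] bound_gen[of snd snd, OF _ _ _ assms]
  by (auto simp: phi_simps digit_lt continuous_on_fst continuous_on_snd)


lemma cont_comp: "continuous_on UNIV (comp N s k)"
proof (induction k)
  case 0 then show ?case by (simp add: continuous_on_id)
next
  case (Suc k) show ?case
    by (simp only: comp.simps) (rule continuous_on_compose[OF cont_phi[OF Npos]], rule continuous_on_subset[OF Suc.IH], simp)
qed

lemma comp_mono: assumes "s \<in> Dinf D" "k \<le> m" shows "comp N s m ` F \<subseteq> comp N s k ` F"
  using assms(2)
proof (induction m)
  case 0 then show ?case by simp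
next
  case (Suc m)
  have "comp N s (Suc m) ` F = comp N s m ` (phi N (s m) ` F)" by (simp add: image_comp)
  also have "\<dots> \<subseteq> comp N s m ` F" using K_sub[of "s m"] assms(1) by (auto simp: Dinf_def)
  finally have *: "comp N s (Suc m) ` F \<subseteq> comp N s m ` F" .
  show ?case
  proof (cases "k = Suc m")
    case False then have "k \<le> m" using Suc.prems by simp
    then show ?thesis using Suc.IH * by blast
  qed simp
qed

lemma small_zero:
  fixes d :: real
  assumes "\<And>k. k \<ge> 1 \<Longrightarrow> \<bar>d\<bar> \<le> 1 / real N ^ k"
  shows "d = 0"
proof (rule ccontr)
  assume d: "d \<noteq> 0"
  have N1: "real N > 1" using N2 by simp
  obtain k where k: "1 / \<bar>d\<bar> < real N ^ k" using real_arch_pow[OF N1] by blast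
  have "real N ^ k \<le> real N ^ Suc k" using N1 by simp
  with k have "1 / \<bar>d\<bar> < real N ^ Suc k" by linarith
  then have "1 / real N ^ Suc k < \<bar>d\<bar>" using d N1
    by (simp add: field_simps)
  with assms[of "Suc k"] show False by simp
qed

definition Iset :: "(nat \<Rightarrow> digit) \<Rightarrow> pt set" where
  "Iset s = (\<Inter>k\<in>{1..}. comp N s k ` F)"

lemma Iset_unique: assumes "y \<in> Iset s" "y' \<in> Iset s" shows "y = y'"
proof -
  have "fst y - fst y' = 0"
  proof (rule small_zero)
    fix k :: nat assume "k \<ge> 1"
    then obtain p p' where pp: "p \<in> F" "p' \<in> F" "y = comp N s k p" "y' = comp N s k p'"
      using assms unfolding Iset_def by blast
    have "fst y - fst y' = (fst p - fst p') / real N ^ k" using comp_fst[OF Npos] pp by simp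
    moreover have "\<bar>fst p - fst p'\<bar> \<le> 1" using unit[OF pp(1)] unit[OF pp(2)] by (simp add: abs_le_iff)
    ultimately show "\<bar>fst y - fst y'\<bar> \<le> 1 / real N ^ k"
      using Npos by (simp add: abs_div divide_right_mono)
  qed
  moreover have "snd y - snd y' = 0"
  proof (rule small_zero)
    fix k :: nat assume "k \<ge> 1"
    then obtain p p' where pp: "p \<in> F" "p' \<in> F" "y = comp N s k p" "y' = comp N s k p'"
      using assms unfolding Iset_def by blast
    have "snd y - snd y' = (snd p - snd p') / real N ^ k" using comp_snd[OF Npos] pp by simp
    moreover have "\<bar>snd p - snd p'\<bar> \<le> 1" using unit[OF pp(1)] unit[OF pp(2)] by (simp add: abs_le_iff)
    ultimately show "\<bar>snd y - snd y'\<bar> \<le> 1 / real N ^ k"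
      using Npos by (simp add: abs_div divide_right_mono)
  qed
  ultimately show ?thesis by (simp add: prod_eq_iff)
qed

lemma Iset_ne: assumes "s \<in> Dinf D" shows "Iset s \<noteq> {}"
proof -
  have "F \<inter> (\<Inter>k\<in>{1..}. comp N s k ` F) \<noteq> {}"
  proof (rule compact_imp_fip_image[OF cF])
    show "closed (comp N s k ` F)" for k
      by (intro compact_imp_closed compact_continuous_image[OF continuous_on_subset[OF cont_comp] cF]) auto
  next
    fix I' :: "nat set" assume I': "finite I'" "I' \<subseteq> {1..}"
    define m where "m = Max (insert 0 I')"
    have km: "k \<in> I' \<Longrightarrow> k \<le> m" for k using I' by (simp add: m_def)
    obtain p where p: "p \<in> F" using neF by blast
    have "comp N s m p \<in> comp N s k ` F" if "k \<in> I' \<or> k = 0" for k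
    proof -
      have "k \<le> m" using km that by auto
      then show ?thesis using comp_mono[OF assms, of k m] p by auto
    qed
    then have "comp N s m p \<in> F \<inter> (\<Inter>k\<in>I'. comp N s k ` F)"
      by (metis (no_types, lifting) Int_iff INT_I comp.simps(1) id_apply image_id)
    then show "F \<inter> (\<Inter>k\<in>I'. comp N s k ` F) \<noteq> {}" by blast
  qed
  then show ?thesis unfolding Iset_def by blast
qed

lemma coding_in: "s \<in> Dinf D \<Longrightarrow> coding N F s \<in> Iset s"
  unfolding coding_def Iset_def[symmetric]
  by (rule theI') (use Iset_ne Iset_unique in blast)

lemma Iset_all: assumes "s \<in> Dinf D" "y \<in> Iset s" shows "y \<in> comp N s m ` F"
proof (cases "m = 0")
  case True
  from assms(2) have "y \<in> comp N s 1 ` F" unfolding Iset_def by (rule INT_D) simp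
  then show ?thesis using comp_mono[OF assms(1), of 0 1] True by auto
qed (use assms(2) in \<open>auto simp: Iset_def\<close>)

lemma shift_step:
  assumes "\<And>m. y \<in> comp N s m ` F"
  shows "y \<in> phi N (s 0) ` F" "\<And>m. pre N (s 0) y \<in> comp N (\<lambda>n. s (Suc n)) m ` F"
proof -
  show "y \<in> phi N (s 0) ` F" using assms[of 1] by simp
  fix m
  from assms[of "Suc m"] obtain p where "p \<in> F" "y = phi N (s 0) (comp N (\<lambda>n. s (Suc n)) m p)"
    unfolding comp_Suc' by auto
  then show "pre N (s 0) y \<in> comp N (\<lambda>n. s (Suc n)) m ` F" using pre_phi[OF Npos] by auto
qed

definition UR :: "pt \<Rightarrow> bool" where
  "UR x \<longleftrightarrow> (\<exists>s xs. (\<forall>k. s k \<in> D) \<and> xs 0 = x \<and> (\<forall>k. xs k \<in> F) \<and>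
     (\<forall>k. xs k = phi N (s k) (xs (Suc k))) \<and> (\<forall>k. \<forall>i\<in>D. xs k \<in> phi N i ` F \<longrightarrow> i = s k))"

lemma UR_key:
  fixes xs :: "nat \<Rightarrow> pt" and s t :: "nat \<Rightarrow> digit" and j k :: nat
  assumes rec: "\<And>k. xs k = phi N (s k) (xs (Suc k))"
    and uq: "\<And>k i. i \<in> D \<Longrightarrow> xs k \<in> phi N i ` F \<Longrightarrow> i = s k"
  shows "t \<in> Dinf D \<Longrightarrow> (\<And>m. xs j \<in> comp N t m ` F) \<Longrightarrow> t k = s (j + k)"
proof (induction k arbitrary: t j)
  case 0
  have "t 0 \<in> D" using 0 by (simp add: Dinf_def)
  then show ?case using uq shift_step(1)[OF 0(2)] by simp
next
  case (Suc k)
  have t0: "t 0 = s j"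
    using uq shift_step(1)[OF Suc(3)] Suc(2) by (simp add: Dinf_def)
  have "pre N (t 0) (xs j) = xs (Suc j)" using rec[of j] t0 pre_phi[OF Npos] by simp
  then have A: "xs (Suc j) \<in> comp N (\<lambda>n. t (Suc n)) m ` F" for m using shift_step(2)[OF Suc(3), of m] by simp
  have B: "(\<lambda>n. t (Suc n)) \<in> Dinf D" using Suc(2) by (simp add: Dinf_def)
  have "t (Suc k) = s (Suc j + k)" using Suc.IH[of "\<lambda>n. t (Suc n)" "Suc j", OF B A] by simp
  then show ?case by simp
qed

lemma UR_unique: assumes "UR x" shows "\<exists>!s. s \<in> Dinf D \<and> coding N F s = x"
proof -
  obtain s xs where sD: "\<And>k. s k \<in> D" and x0: "xs 0 = x" and xF: "\<And>k. xs k \<in> F"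
    and rec: "\<And>k. xs k = phi N (s k) (xs (Suc k))"
    and uq: "\<And>k i. i \<in> D \<Longrightarrow> xs k \<in> phi N i ` F \<Longrightarrow> i = s k"
    using assms unfolding UR_def by blast
  have sDinf: "s \<in> Dinf D" using sD by (simp add: Dinf_def)
  have cx: "comp N s k (xs k) = x" for k
    by (induction k) (auto simp: x0 rec[symmetric])
  have "x \<in> comp N s k ` F" for k using cx[of k] xF[of k] by (metis image_eqI)
  then have "x \<in> Iset s" unfolding Iset_def by blast
  then have cs: "coding N F s = x" using coding_in[OF sDinf] Iset_unique by blast
  show ?thesis
  proof (rule ex1I[of _ s])
    show "s \<in> Dinf D \<and> coding N F s = x" using sDinf cs by simp
  next
    fix t assume t: "t \<in> Dinf D \<and> coding N F t = x"
    then have "x \<in> Iset t" using coding_in by blast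
    then have A: "\<And>m. xs 0 \<in> comp N t m ` F" using Iset_all[of t x] t x0 by auto
    show "t = s"
    proof
      fix n have "t n = s (0 + n)" using UR_key[of xs s t 0 n, OF rec uq conjunct1[OF t] A] by simp
      then show "t n = s n" by simp
    qed
  qed
qed


lemma pre_in_F: assumes "c \<in> phi N i ` F" shows "pre N i c \<in> F"
proof -
  obtain q where "q \<in> F" "c = phi N i q" using assms by blast
  then show ?thesis using pre_phi[OF Npos, of i q] by simp
qed

lemma img_minus: assumes "c \<in> phi N i ` F"
  shows "phi N i ` (F - {pre N i c}) = phi N i ` F - {c}"
  using image_set_diff[OF inj_phi[OF Npos], of i F "{pre N i c}"] phi_pre[OF Npos] by simp

lemma conn_img: "connected S \<Longrightarrow> connected (phi N i ` S)"
  by (rule connected_continuous_image[OF cont_phi[OF Npos]])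

lemma sep:
  assumes cF: "connected F" and c: "c \<in> F" and nc: "\<not> connected (F - {c})"
    and conK: "\<And>i. i \<in> D \<Longrightarrow> connected (phi N i ` F - {c})"
  shows "\<exists>D1 D2. D1 \<union> D2 = D \<and> D1 \<inter> D2 = {} \<and> D1 \<noteq> {} \<and> D2 \<noteq> {} \<and>
     (\<Union>i\<in>D1. phi N i ` F) \<inter> (\<Union>i\<in>D2. phi N i ` F) = {c}"
proof -
  obtain A B where AB: "open A" "open B" "F - {c} \<subseteq> A \<union> B" "A \<inter> B \<inter> (F - {c}) = {}"
    "A \<inter> (F - {c}) \<noteq> {}" "B \<inter> (F - {c}) \<noteq> {}"
    using nc unfolding connected_def by blast
  have side: "phi N i ` F - {c} \<subseteq> A \<or> phi N i ` F - {c} \<subseteq> B" if i: "i \<in> D" for i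
  proof -
    have sub: "phi N i ` F - {c} \<subseteq> F - {c}" using K_sub[OF i] by blast
    have "A \<inter> (phi N i ` F - {c}) = {} \<or> B \<inter> (phi N i ` F - {c}) = {}"
      by (rule connectedD[OF conK[OF i] AB(1,2)]) (use sub AB(3,4) in blast)+
    then show ?thesis using sub AB(3) by blast
  qed
  define D1 where "D1 = {i\<in>D. phi N i ` F - {c} \<subseteq> A}"
  define D2 where "D2 = D - D1"
  have D2B: "i \<in> D2 \<Longrightarrow> phi N i ` F - {c} \<subseteq> B" for i using side unfolding D1_def D2_def by blast
  let ?U1 = "\<Union>i\<in>D1. phi N i ` F" and ?U2 = "\<Union>i\<in>D2. phi N i ` F"
  have sub1: "?U1 \<subseteq> F" "?U2 \<subseteq> F" using K_sub unfolding D1_def D2_def by blast+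
  have int: "?U1 \<inter> ?U2 \<subseteq> {c}"
  proof
    fix p assume p: "p \<in> ?U1 \<inter> ?U2"
    show "p \<in> {c}"
    proof (rule ccontr)
      assume "p \<notin> {c}"
      obtain i j where ij: "i \<in> D1" "j \<in> D2" "p \<in> phi N i ` F" "p \<in> phi N j ` F" using p by blast
      have "p \<in> A" using ij(1,3) \<open>p \<notin> {c}\<close> unfolding D1_def by blast
      moreover have "p \<in> B" using D2B[OF ij(2)] ij(4) \<open>p \<notin> {c}\<close> by blast
      moreover have "p \<in> F - {c}" using sub1 ij(1,3) \<open>p \<notin> {c}\<close> by blast
      ultimately show False using AB(4) by blast
    qed
  qed
  have "D1 \<noteq> {}"
  proof -
    obtain p where p: "p \<in> A" "p \<in> F - {c}" using AB(5) by blast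
    then obtain i where i: "i \<in> D" "p \<in> phi N i ` F" using memF[of p] by blast
    show ?thesis
    proof
      assume "D1 = {}"
      then have "i \<in> D2" using i by (simp add: D2_def)
      then have "p \<in> B" using D2B i p by blast
      then show False using p AB(4) by blast
    qed
  qed
  moreover have "D2 \<noteq> {}"
  proof -
    obtain p where p: "p \<in> B" "p \<in> F - {c}" using AB(6) by blast
    then obtain i where i: "i \<in> D" "p \<in> phi N i ` F" using memF[of p] by blast
    show ?thesis
    proof
      assume "D2 = {}"
      then have "i \<in> D1" using i unfolding D2_def by blast
      then have "p \<in> A" using i p unfolding D1_def by blast
      then show False using p AB(4) by blast
    qed
  qed
  moreover have "?U1 \<inter> ?U2 \<noteq> {}"
  proof
    assume e: "?U1 \<inter> ?U2 = {}"
    have fin: "finite D1" "finite D2" using finD unfolding D1_def D2_def by auto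
    have cl: "closed ?U1" "closed ?U2"
      by (rule compact_imp_closed, rule compact_UN[OF fin(1)], rule cK)
         (rule compact_imp_closed, rule compact_UN[OF fin(2)], rule cK)
    have cov: "F \<subseteq> ?U1 \<union> ?U2"
    proof
      fix p assume "p \<in> F"
      then obtain i where "i \<in> D" "p \<in> phi N i ` F" using memF by blast
      then show "p \<in> ?U1 \<union> ?U2" unfolding D2_def by blast
    qed
    have ne: "?U1 \<inter> F \<noteq> {}" "?U2 \<inter> F \<noteq> {}"
      using \<open>D1 \<noteq> {}\<close> \<open>D2 \<noteq> {}\<close> sub1 neF by blast+
    have "?U1 \<inter> ?U2 \<inter> F = {}" using e by blast
    from connected_closedD[OF cF this cov cl] ne show False by blast
  qed
  ultimately have "?U1 \<inter> ?U2 = {c}" "D1 \<noteq> {}" "D2 \<noteq> {}" using int by blast+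
  moreover have "D1 \<union> D2 = D" "D1 \<inter> D2 = {}" unfolding D2_def D1_def by blast+
  ultimately show ?thesis by blast
qed

lemma C1:
  assumes cF: "connected F" and cut: "cut_point F c" and i: "i \<in> D" "c \<in> phi N i ` F"
    and uq: "\<And>j. j \<in> D \<Longrightarrow> c \<in> phi N j ` F \<Longrightarrow> j = i"
  shows "cut_point F (pre N i c)"
proof -
  have pF: "pre N i c \<in> F" using pre_in_F[OF i(2)] .
  have "\<not> connected (F - {pre N i c})"
  proof
    assume con: "connected (F - {pre N i c})"
    have cK: "connected (phi N j ` F - {c})" if j: "j \<in> D" for j
    proof (cases "j = i")
      case True then show ?thesis using conn_img[OF con, of i] img_minus[OF i(2)] by simp
    next
      case False
      then have "c \<notin> phi N j ` F" using uq j by blast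
      then show ?thesis using conn_img[OF cF, of j] by simp
    qed
    from sep[OF cF _ _ cK] cut obtain D1 D2 where DD: "D1 \<union> D2 = D" "D1 \<inter> D2 = {}"
      "(\<Union>i\<in>D1. phi N i ` F) \<inter> (\<Union>i\<in>D2. phi N i ` F) = {c}"
      unfolding cut_point_def by blast
    then obtain a b where ab: "a \<in> D1" "b \<in> D2" "c \<in> phi N a ` F" "c \<in> phi N b ` F" by blast
    then have "a = i" "b = i" using uq DD(1) by blast+
    then show False using ab DD(2) by blast
  qed
  then show ?thesis using pF by (simp add: cut_point_def)
qed

lemma C2:
  assumes cF: "connected F" and nf: "\<not> fragile N D F" and cut: "cut_point F c"
  shows "\<exists>i\<in>D. c \<in> phi N i ` F \<and> cut_point F (pre N i c)"
proof (rule ccontr)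
  assume H: "\<not> ?thesis"
  have cK: "connected (phi N j ` F - {c})" if j: "j \<in> D" for j
  proof (cases "c \<in> phi N j ` F")
    case True
    then have "connected (F - {pre N j c})" using H j pre_in_F[OF True] by (auto simp: cut_point_def)
    then show ?thesis using conn_img[of _ j] img_minus[OF True] by metis
  next
    case False
    then show ?thesis using conn_img[OF cF, of j] by simp
  qed
  from sep[OF cF _ _ cK] cut obtain D1 D2 where "D1 \<union> D2 = D" "D1 \<inter> D2 = {}" "D1 \<noteq> {}" "D2 \<noteq> {}"
      "(\<Union>i\<in>D1. phi N i ` F) \<inter> (\<Union>i\<in>D2. phi N i ` F) = {c}"
    unfolding cut_point_def by blast
  then have "fragile N D F" unfolding fragile_def by blast
  with nf show False by simp
qed


definition Bd :: "pt \<Rightarrow> bool" where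
  "Bd p \<longleftrightarrow> fst p = 0 \<or> fst p = 1 \<or> snd p = 0 \<or> snd p = 1"

definition Corner :: "pt \<Rightarrow> bool" where
  "Corner p \<longleftrightarrow> (fst p = 0 \<or> fst p = 1) \<and> (snd p = 0 \<or> snd p = 1)"

lemma coord_eq: assumes "c = phi N i q"
  shows "fst q + real (fst i) = real N * fst c" "snd q + real (snd i) = real N * snd c"
  using assms Npos by (simp_all add: phi_simps field_simps)

lemma ne_coord:
  fixes a b :: real and m n :: nat
  assumes "0 \<le> a" "a \<le> 1" "0 \<le> b" "b \<le> 1" "a + real m = b + real n" "m \<noteq> n"
  shows "a = 0 \<or> a = 1"
proof (cases "m < n")
  case True
  then have "real m + 1 \<le> real n" by simp
  then show ?thesis using assms by linarith
next
  case False
  then have "real n + 1 \<le> real m" using assms(6) by simp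
  then show ?thesis using assms by linarith
qed

lemma zero_coord:
  fixes a :: real and m :: nat
  assumes "0 \<le> a" "a + real m = 0" shows "a = 0 \<and> m = 0"
  using assms by (simp add: add_nonneg_eq_0_iff)

lemma one_coord:
  fixes a :: real and m :: nat
  assumes "a \<le> 1" "m < N" "a + real m = real N" shows "a = 1 \<and> m = N - 1"
proof -
  have "real m \<le> real N - 1" using assms(2) by linarith
  then have a1: "a = 1" using assms by linarith
  then have "real m = real N - 1" using assms by linarith
  then show ?thesis using a1 assms(2) by linarith
qed

lemma BD:
  assumes ij: "i \<in> D" "j \<in> D" "i \<noteq> j" and c: "c \<in> phi N i ` F" "c \<in> phi N j ` F"
  shows "Bd (pre N i c)"
proof -
  obtain q where q: "q \<in> F" "c = phi N i q" using c(1) by blast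
  obtain r where r: "r \<in> F" "c = phi N j r" using c(2) by blast
  have pq: "pre N i c = q" using q pre_phi[OF Npos] by simp
  have e1: "fst q + real (fst i) = fst r + real (fst j)" using coord_eq[OF q(2)] coord_eq[OF r(2)] by simp
  have e2: "snd q + real (snd i) = snd r + real (snd j)" using coord_eq[OF q(2)] coord_eq[OF r(2)] by simp
  have "fst i \<noteq> fst j \<or> snd i \<noteq> snd j" using ij(3) by (simp add: prod_eq_iff)
  then show ?thesis
  proof
    assume "fst i \<noteq> fst j"
    then have "fst q = 0 \<or> fst q = 1" using ne_coord[OF unit(1,2)[OF q(1)] unit(1,2)[OF r(1)] e1] by blast
    then show ?thesis using pq by (auto simp: Bd_def)
  next
    assume "snd i \<noteq> snd j"
    then have "snd q = 0 \<or> snd q = 1" using ne_coord[OF unit(3,4)[OF q(1)] unit(3,4)[OF r(1)] e2] by blast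
    then show ?thesis using pq by (auto simp: Bd_def)
  qed
qed

lemma BP: assumes "Bd c" "i \<in> D" "c \<in> phi N i ` F" shows "Bd (pre N i c)"
proof -
  obtain q where q: "q \<in> F" "c = phi N i q" using assms(3) by blast
  have pq: "pre N i c = q" using q pre_phi[OF Npos] by simp
  note e = coord_eq[OF q(2)]
  note u = unit[OF q(1)]
  note d = digit_lt[OF assms(2)]
  from assms(1) show ?thesis unfolding Bd_def pq
  proof (elim disjE)
    assume "fst c = 0" then show "fst q = 0 \<or> fst q = 1 \<or> snd q = 0 \<or> snd q = 1"
      using zero_coord[of "fst q" "fst i"] e u by simp
  next
    assume "fst c = 1" then show "fst q = 0 \<or> fst q = 1 \<or> snd q = 0 \<or> snd q = 1"
      using one_coord[of "fst q" "fst i"] e u d by simp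
  next
    assume "snd c = 0" then show "fst q = 0 \<or> fst q = 1 \<or> snd q = 0 \<or> snd q = 1"
      using zero_coord[of "snd q" "snd i"] e u by simp
  next
    assume "snd c = 1" then show "fst q = 0 \<or> fst q = 1 \<or> snd q = 0 \<or> snd q = 1"
      using one_coord[of "snd q" "snd i"] e u d by simp
  qed
qed

lemma CO:
  assumes b: "Bd c" and ij: "i \<in> D" "j \<in> D" "i \<noteq> j" and c: "c \<in> phi N i ` F" "c \<in> phi N j ` F"
  shows "Corner (pre N i c)"
proof -
  obtain q where q: "q \<in> F" "c = phi N i q" using c(1) by blast
  obtain r where r: "r \<in> F" "c = phi N j r" using c(2) by blast
  have pq: "pre N i c = q" using q pre_phi[OF Npos] by simp
  note eq = coord_eq[OF q(2)] and er = coord_eq[OF r(2)]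
  note uq = unit[OF q(1)] and ur = unit[OF r(1)]
  note di = digit_lt[OF ij(1)] and dj = digit_lt[OF ij(2)]
  have e1: "fst q + real (fst i) = fst r + real (fst j)" using eq er by simp
  have e2: "snd q + real (snd i) = snd r + real (snd j)" using eq er by simp
  have f: "(fst q = 0 \<or> fst q = 1) \<and> fst i = fst j" if "fst c = 0 \<or> fst c = 1"
    using that
  proof
    assume "fst c = 0"
    then show ?thesis using zero_coord[of "fst q" "fst i"] zero_coord[of "fst r" "fst j"] eq er uq ur by simp
  next
    assume "fst c = 1"
    then show ?thesis using one_coord[of "fst q" "fst i"] one_coord[of "fst r" "fst j"] eq er uq ur di dj by simp
  qed
  have g: "(snd q = 0 \<or> snd q = 1) \<and> snd i = snd j" if "snd c = 0 \<or> snd c = 1"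
    using that
  proof
    assume "snd c = 0"
    then show ?thesis using zero_coord[of "snd q" "snd i"] zero_coord[of "snd r" "snd j"] eq er uq ur by simp
  next
    assume "snd c = 1"
    then show ?thesis using one_coord[of "snd q" "snd i"] one_coord[of "snd r" "snd j"] eq er uq ur di dj by simp
  qed
  have ij': "fst i \<noteq> fst j \<or> snd i \<noteq> snd j" using ij(3) by (simp add: prod_eq_iff)
  have nf: "fst i \<noteq> fst j \<Longrightarrow> fst q = 0 \<or> fst q = 1"
    using ne_coord[OF uq(1,2) ur(1,2) e1] by blast
  have ns: "snd i \<noteq> snd j \<Longrightarrow> snd q = 0 \<or> snd q = 1"
    using ne_coord[OF uq(3,4) ur(3,4) e2] by blast
  have "(fst q = 0 \<or> fst q = 1) \<and> (snd q = 0 \<or> snd q = 1)"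
  proof (cases "fst c = 0 \<or> fst c = 1")
    case True
    then have h: "fst i = fst j" "fst q = 0 \<or> fst q = 1" using f by auto
    then have "snd i \<noteq> snd j" using ij' by simp
    then show ?thesis using ns h(2) by simp
  next
    case False
    then have "snd c = 0 \<or> snd c = 1" using b by (auto simp: Bd_def)
    then have h: "snd i = snd j" "snd q = 0 \<or> snd q = 1" using g by auto
    then have "fst i \<noteq> fst j" using ij' by simp
    then show ?thesis using nf h(2) by simp
  qed
  then show ?thesis using pq by (simp add: Corner_def)
qed

lemma corner_cell:
  assumes co: "Corner c" and j: "j \<in> D" and q: "q \<in> F" "c = phi N j q"
  shows "q = c \<and> j = (if fst c = 0 then 0 else N - 1, if snd c = 0 then 0 else N - 1)"
proof -
  note e = coord_eq[OF q(2)] and u = unit[OF q(1)] and d = digit_lt[OF j]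
  have f: "fst q = fst c \<and> fst j = (if fst c = 0 then 0 else N - 1)"
  proof (cases "fst c = 0")
    case True then show ?thesis using zero_coord[of "fst q" "fst j"] e u by simp
  next
    case False then have "fst c = 1" using co by (simp add: Corner_def)
    then show ?thesis using one_coord[of "fst q" "fst j"] e u d by simp
  qed
  have g: "snd q = snd c \<and> snd j = (if snd c = 0 then 0 else N - 1)"
  proof (cases "snd c = 0")
    case True then show ?thesis using zero_coord[of "snd q" "snd j"] e u by simp
  next
    case False then have "snd c = 1" using co by (simp add: Corner_def)
    then show ?thesis using one_coord[of "snd q" "snd j"] e u d by simp
  qed
  show ?thesis using f g by (simp add: prod_eq_iff)
qed

lemma CU: assumes co: "Corner c" and cF: "c \<in> F" shows "UR c"
proof -
  obtain i where i: "i \<in> D" "c \<in> phi N i ` F" using memF[OF cF] by blast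
  obtain q where q: "q \<in> F" "c = phi N i q" using i(2) by blast
  have qc: "q = c" and iv: "i = (if fst c = 0 then 0 else N - 1, if snd c = 0 then 0 else N - 1)"
    using corner_cell[OF co i(1) q] by auto
  have uq: "j = i" if jj: "j \<in> D" "c \<in> phi N j ` F" for j
  proof -
    obtain r where r: "r \<in> F" "c = phi N j r" using jj(2) by blast
    show ?thesis using corner_cell[OF co jj(1) r] iv by simp
  qed
  have ci: "c = phi N i c" using q(2) unfolding qc .
  show ?thesis unfolding UR_def
  proof (intro exI[of _ "\<lambda>_. i"] exI[of _ "\<lambda>_. c"] conjI allI ballI impI)
    fix k j assume "j \<in> D" "c \<in> phi N j ` F" then show "j = i" by (rule uq)
  qed (rule i(1) cF ci refl)+
qed

definition cell :: "pt \<Rightarrow> digit" where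
  "cell c = (SOME i. i \<in> D \<and> c \<in> phi N i ` F)"

lemma cellprop: "c \<in> F \<Longrightarrow> cell c \<in> D \<and> c \<in> phi N (cell c) ` F"
  unfolding cell_def by (rule someI_ex) (use memF in blast)

lemma descend:
  assumes cF: "connected F" and cut: "cut_point F x" and inv: "Inv x"
    and pres: "\<And>c i. Inv c \<Longrightarrow> i \<in> D \<Longrightarrow> c \<in> phi N i ` F \<Longrightarrow> Inv (pre N i c)"
  shows "UR x \<or> (\<exists>y. cut_point F y \<and> Inv y \<and> (\<exists>i\<in>D. \<exists>j\<in>D. i \<noteq> j \<and> y \<in> phi N i ` F \<and> y \<in> phi N j ` F))"
proof (rule disjCI)
  assume H: "\<not> (\<exists>y. cut_point F y \<and> Inv y \<and> (\<exists>i\<in>D. \<exists>j\<in>D. i \<noteq> j \<and> y \<in> phi N i ` F \<and> y \<in> phi N j ` F))"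
  define nx where "nx c = pre N (cell c) c" for c
  define xs where "xs k = (nx ^^ k) x" for k
  define s where "s k = cell (xs k)" for k
  have xsS: "xs (Suc k) = pre N (s k) (xs k)" for k by (simp add: xs_def s_def nx_def)
  have P: "cut_point F (xs k) \<and> Inv (xs k)" for k
  proof (induction k)
    case 0 then show ?case using cut inv by (simp add: xs_def)
  next
    case (Suc k)
    then have xF: "xs k \<in> F" by (simp add: cut_point_def)
    note cp = cellprop[OF xF, folded s_def]
    have uq: "j = s k" if "j \<in> D" "xs k \<in> phi N j ` F" for j
      using H Suc cp that by blast
    have "cut_point F (pre N (s k) (xs k))" by (rule C1[OF cF]) (use Suc cp uq in auto)
    moreover have "Inv (pre N (s k) (xs k))" using pres Suc cp by blast
    ultimately show ?case by (simp add: xsS)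
  qed
  show "UR x" unfolding UR_def
  proof (intro exI conjI allI ballI impI)
    fix k
    have xF: "xs k \<in> F" using P by (simp add: cut_point_def)
    note cp = cellprop[OF xF, folded s_def]
    show "s k \<in> D" using cp by simp
    show "xs k \<in> F" by (rule xF)
    show "xs k = phi N (s k) (xs (Suc k))" by (simp add: xsS phi_pre[OF Npos])
    fix j assume "j \<in> D" "xs k \<in> phi N j ` F"
    then show "j = s k" using H P cp by blast
  next
    show "xs 0 = x" by (simp add: xs_def)
  qed
qed

end

theorem mainTheorem18:
  fixes N :: nat and D :: "digit set" and F :: "pt set"
  assumes "GSC_data N D"
    and "is_attractor N D F"
    and "connected F"
    and "\<not> fragile N D F"
    and "\<exists>x. cut_point F x"
  shows "\<exists>x. cut_point F x \<and> (\<exists>!s. s \<in> Dinf D \<and> coding N F s = x)"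
proof -
  interpret gsc N D F using assms(1,2) by unfold_locales
  note cF = assms(3) and nf = assms(4)
  obtain x where x: "cut_point F x" using assms(5) by blast
  show ?thesis
  proof (cases "UR x")
    case True then show ?thesis using x UR_unique by blast
  next
    case False
    then obtain y i j where y: "cut_point F y" "i \<in> D" "j \<in> D" "i \<noteq> j" "y \<in> phi N i ` F" "y \<in> phi N j ` F"
      using descend[OF cF x, of "\<lambda>_. True"] by blast
    obtain i' where i': "i' \<in> D" "y \<in> phi N i' ` F" "cut_point F (pre N i' y)" using C2[OF cF nf y(1)] by blast
    obtain j' where j': "j' \<in> D" "j' \<noteq> i'" "y \<in> phi N j' ` F"
      using y by (cases "i = i'") auto
    define z where "z = pre N i' y"
    have bz: "Bd z" unfolding z_def by (rule BD[OF i'(1) j'(1)]) (use i' j' in auto)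
    show ?thesis
    proof (cases "UR z")
      case True then show ?thesis using i'(3) UR_unique unfolding z_def by blast
    next
      case False
      then obtain w a b where w: "cut_point F w" "Bd w" "a \<in> D" "b \<in> D" "a \<noteq> b" "w \<in> phi N a ` F" "w \<in> phi N b ` F"
        using descend[OF cF i'(3)[folded z_def], of Bd] bz BP by blast
      obtain a' where a': "a' \<in> D" "w \<in> phi N a' ` F" "cut_point F (pre N a' w)" using C2[OF cF nf w(1)] by blast
      obtain b' where b': "b' \<in> D" "b' \<noteq> a'" "w \<in> phi N b' ` F"
        using w by (cases "a = a'") auto
      have "Corner (pre N a' w)" by (rule CO[OF w(2) a'(1) b'(1)]) (use a' b' in auto)
      then have "UR (pre N a' w)" using CU a'(3) by (simp add: cut_point_def)
      then show ?thesis using a'(3) UR_unique by blast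
    qed
  qed
qed

end
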